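(* If a second-order ODE $x_2=F(t,x,x_1)$ is invariant under a telescopic vector field $\tau^{(2)}=\alpha\partial_t+\beta\partial_x+\gamma^{(1)}\partial_{x_1}+\gamma^{(2)}\partial_{x_2}$, then $\mathbf{X}=\partial_x$ is a $\lambda$-symmetry of the equation for the function $\lambda=\lambda(t,x,x_1)$ given by $$\lambda=\frac{\gamma^{(1)}-\alpha F}{\beta-\alpha x_1}.$$
   Context: Jet coordinates $(t,x,x_1,x_2)$, $x_i=d^ix/dt^i$; $D_t$ the total derivative. A telescopic vector field of order 2 is $\tau^{(2)}=\alpha\partial_t+\beta\partial_x+\gamma^{(1)}\partial_{x_1}+\gamma^{(2)}\partial_{x_2}$ with $\alpha,\beta,\gamma^{(1)}$ smooth functions of $(t,x,x_1)$, $\beta-\alpha x_1\neq0$, and $\gamma^{(2)}=D_t(\gamma^{(1)})-D_t(\alpha)x_2+\frac{\gamma^{(1)}+x_1D_t\alpha-D_t\beta}{\beta-x_1\alpha}(\gamma^{(1)}-\alpha x_2)$; invariance means $\tau^{(2)}$ is tangent to $\{x_2=F\}$. For $\lambda=\lambda(t,x,x_1)$ and $\mathbf{X}=\rho(t,x)\partial_t+\phi^0(t,x)\partial_x$, $\mathbf{X}^{[\lambda,(2)]}=\rho\partial_t+\phi^0\partial_x+\phi^{[\lambda,(1)]}\partial_{x_1}+\phi^{[\lambda,(2)]}\partial_{x_2}$ with $\phi^{[\lambda,(0)]}=\phi^0$, $\phi^{[\lambda,(i)]}=D_t(\phi^{[\lambda,(i-1)]})-D_t(\rho)x_i+\lambda(\phi^{[\lambda,(i-1)]}-\rho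 x_i)$; $\mathbf{X}$ is a $\lambda$-symmetry of $x_2=F$ if $\mathbf{X}^{[\lambda,(2)]}$ is tangent to $\{x_2=F\}$. *)

theory Defs
  imports "HOL-Analysis.Analysis"
begin

text \<open>Smoothness (C-infinity on R^3): continuous, with all first
  partial derivatives existing everywhere and again smooth (coinductively, hence all
  iterated partial derivatives exist and are continuous).\<close>

coinductive smooth3 :: "(real \<Rightarrow> real \<Rightarrow> real \<Rightarrow> real) \<Rightarrow> bool" where
  "continuous_on UNIV (\<lambda>(t, x, y). f t x y) \<Longrightarrow>
   (\<And>t x y. ((\<lambda>s. f s x y) has_real_derivative ft t x y) (at t)) \<Longrightarrow>
   (\<And>t x y. ((\<lambda>s. f t s y) has_real_derivative fx t x y) (at x)) \<Longrightarrow>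
   (\<And>t x y. ((\<lambda>s. f t x s) has_real_derivative fy t x y) (at y)) \<Longrightarrow>
   smooth3 ft \<Longrightarrow> smooth3 fx \<Longrightarrow> smooth3 fy \<Longrightarrow> smooth3 f"

definition pt :: "(real \<Rightarrow> real \<Rightarrow> real \<Rightarrow> real) \<Rightarrow> real \<Rightarrow> real \<Rightarrow> real \<Rightarrow> real" where
  "pt f t x x1 = deriv (\<lambda>s. f s x x1) t"
definition px :: "(real \<Rightarrow> real \<Rightarrow> real \<Rightarrow> real) \<Rightarrow> real \<Rightarrow> real \<Rightarrow> real \<Rightarrow> real" where
  "px f t x x1 = deriv (\<lambda>s. f t s x1) x"
definition px1 :: "(real \<Rightarrow> real \<Rightarrow> real \<Rightarrow> real) \<Rightarrow> real \<Rightarrow> real \<Rightarrow> real \<Rightarrow> real" where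
  "px1 f t x x1 = deriv (\<lambda>s. f t x s) x1"

definition Dt :: "(real \<Rightarrow> real \<Rightarrow> real \<Rightarrow> real) \<Rightarrow> real \<Rightarrow> real \<Rightarrow> real \<Rightarrow> real \<Rightarrow> real" where
  "Dt f t x x1 x2 = pt f t x x1 + x1 * px f t x x1 + x2 * px1 f t x x1"

definition Dt0 :: "(real \<Rightarrow> real \<Rightarrow> real) \<Rightarrow> real \<Rightarrow> real \<Rightarrow> real \<Rightarrow> real" where
  "Dt0 g t x x1 = deriv (\<lambda>s. g s x) t + x1 * deriv (\<lambda>s. g t s) x"

definition gamma2 :: "(real \<Rightarrow> real \<Rightarrow> real \<Rightarrow> real) \<Rightarrow> (real \<Rightarrow> real \<Rightarrow> real \<Rightarrow> real) \<Rightarrow>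
    (real \<Rightarrow> real \<Rightarrow> real \<Rightarrow> real) \<Rightarrow> real \<Rightarrow> real \<Rightarrow> real \<Rightarrow> real \<Rightarrow> real" where
  "gamma2 \<alpha> \<beta> \<gamma>1 t x x1 x2 =
     Dt \<gamma>1 t x x1 x2 - Dt \<alpha> t x x1 x2 * x2
     + (\<gamma>1 t x x1 + x1 * Dt \<alpha> t x x1 x2 - Dt \<beta> t x x1 x2) / (\<beta> t x x1 - x1 * \<alpha> t x x1)
       * (\<gamma>1 t x x1 - \<alpha> t x x1 * x2)"

text \<open>The telescopic vector field alpha d_t + beta d_x + gamma1 d_x1 + gamma2 d_x2 is tangent
  to the surface {x2 = F(t,x,x1)}, i.e. it annihilates x2 - F on that surface.\<close>
definition telescopic_invariant :: "(real \<Rightarrow> real \<Rightarrow> real \<Rightarrow> real) \<Rightarrow> (real \<Rightarrow> real \<Rightarrow> real \<Rightarrow> real) \<Rightarrow>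
    (real \<Rightarrow> real \<Rightarrow> real \<Rightarrow> real) \<Rightarrow> (real \<Rightarrow> real \<Rightarrow> real \<Rightarrow> real) \<Rightarrow> bool" where
  "telescopic_invariant \<alpha> \<beta> \<gamma>1 F \<longleftrightarrow>
     (\<forall>t x x1. gamma2 \<alpha> \<beta> \<gamma>1 t x x1 (F t x x1)
        = \<alpha> t x x1 * pt F t x x1 + \<beta> t x x1 * px F t x x1 + \<gamma>1 t x x1 * px1 F t x x1)"

definition lphi1 :: "(real \<Rightarrow> real \<Rightarrow> real) \<Rightarrow> (real \<Rightarrow> real \<Rightarrow> real) \<Rightarrow>
    (real \<Rightarrow> real \<Rightarrow> real \<Rightarrow> real) \<Rightarrow> real \<Rightarrow> real \<Rightarrow> real \<Rightarrow> real" where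
  "lphi1 \<rho> \<phi>0 lam t x x1 =
     Dt0 \<phi>0 t x x1 - Dt0 \<rho> t x x1 * x1 + lam t x x1 * (\<phi>0 t x - \<rho> t x * x1)"

definition lphi2 :: "(real \<Rightarrow> real \<Rightarrow> real) \<Rightarrow> (real \<Rightarrow> real \<Rightarrow> real) \<Rightarrow>
    (real \<Rightarrow> real \<Rightarrow> real \<Rightarrow> real) \<Rightarrow> real \<Rightarrow> real \<Rightarrow> real \<Rightarrow> real \<Rightarrow> real" where
  "lphi2 \<rho> \<phi>0 lam t x x1 x2 =
     Dt (lphi1 \<rho> \<phi>0 lam) t x x1 x2 - Dt0 \<rho> t x x1 * x2
     + lam t x x1 * (lphi1 \<rho> \<phi>0 lam t x x1 - \<rho> t x * x2)"

text \<open>X is a lambda-symmetry of x2 = F: its second lambda-prolongation is tangent to {x2 = F}.\<close>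
definition lambda_symmetry :: "(real \<Rightarrow> real \<Rightarrow> real) \<Rightarrow> (real \<Rightarrow> real \<Rightarrow> real) \<Rightarrow>
    (real \<Rightarrow> real \<Rightarrow> real \<Rightarrow> real) \<Rightarrow> (real \<Rightarrow> real \<Rightarrow> real \<Rightarrow> real) \<Rightarrow> bool" where
  "lambda_symmetry \<rho> \<phi>0 lam F \<longleftrightarrow>
     (\<forall>t x x1. lphi2 \<rho> \<phi>0 lam t x x1 (F t x x1)
        = \<rho> t x * pt F t x x1 + \<phi>0 t x * px F t x x1 + lphi1 \<rho> \<phi>0 lam t x x1 * px1 F t x x1)"

end

theory Submission
  imports Defs
begin

lemma alg:
  fixes a b g f a_t a_x a_y bt bx by' gt gx gy ft fx fy x1 :: real
  assumes D: "b - a*x1 \<noteq> 0"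
  and H: "(gt + x1*gx + f*gy) - (a_t + x1*a_x + f*a_y)*f + (g + x1*(a_t + x1*a_x + f*a_y) - (bt + x1*bx+f*by'))/(b - x1*a)*(g - a*f) = a*ft + b*fx + g*fy"
  shows "((gt - a_t*f - a*ft)*(b-a*x1) - (g-a*f)*(bt - a_t*x1))/(b-a*x1)^2
   + x1*(((gx - a_x*f - a*fx)*(b-a*x1) - (g-a*f)*(bx - a_x*x1))/(b-a*x1)^2)
   + f*(((gy - a_y*f - a*fy)*(b-a*x1) - (g-a*f)*(by' - a_y*x1 - a))/(b-a*x1)^2)
   + (g-a*f)/(b-a*x1) * ((g-a*f)/(b-a*x1)) = fx + (g-a*f)/(b-a*x1) * fy"
proof -
  define d where "d = b - a*x1"
  have D': "b - x1*a = d" by (simp add: d_def mult.commute)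
  have dn: "d \<noteq> 0" using D d_def by simp
  from H have H': "((gt + x1*gx + f*gy) - (a_t + x1*a_x + f*a_y)*f)*d + (g + x1*(a_t + x1*a_x + f*a_y) - (bt + x1*bx+f*by'))*(g - a*f) = (a*ft + b*fx + g*fy)*d"
    unfolding D' using dn by (simp add: field_simps)
  have key: "((gt - a_t*f - a*ft)*d - (g-a*f)*(bt - a_t*x1))
   + x1*(((gx - a_x*f - a*fx)*d - (g-a*f)*(bx - a_x*x1)))
   + f*(((gy - a_y*f - a*fy)*d - (g-a*f)*(by' - a_y*x1 - a)))
   + (g-a*f)*(g-a*f) = fx*d^2 + (g-a*f)*fy*d"
  proof -
    have "((gt - a_t*f - a*ft)*d - (g-a*f)*(bt - a_t*x1))
   + x1*(((gx - a_x*f - a*fx)*d - (g-a*f)*(bx - a_x*x1)))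
   + f*(((gy - a_y*f - a*fy)*d - (g-a*f)*(by' - a_y*x1 - a)))
   + (g-a*f)*(g-a*f) - (fx*d^2 + (g-a*f)*fy*d)
   = (((gt + x1*gx + f*gy) - (a_t + x1*a_x + f*a_y)*f)*d + (g + x1*(a_t + x1*a_x + f*a_y) - (bt + x1*bx+f*by'))*(g - a*f)) - (a*ft + b*fx + g*fy)*d"
      unfolding d_def by (simp add: algebra_simps power2_eq_square)
    then show ?thesis using H' by simp
  qed
  hence k2: "(((gt - a_t*f - a*ft)*d - (g-a*f)*(bt - a_t*x1))
   + x1*(((gx - a_x*f - a*fx)*d - (g-a*f)*(bx - a_x*x1)))
   + f*(((gy - a_y*f - a*fy)*d - (g-a*f)*(by' - a_y*x1 - a)))
   + (g-a*f)*(g-a*f)) / d^2 = (fx*d^2 + (g-a*f)*fy*d) / d^2" by simp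
  have e1: "(fx*d^2 + (g-a*f)*fy*d) / d^2 = fx + (g-a*f)/d * fy"
    using dn by (simp add: add_divide_distrib power2_eq_square)
  have e2: "(((gt - a_t*f - a*ft)*d - (g-a*f)*(bt - a_t*x1))
   + x1*(((gx - a_x*f - a*fx)*d - (g-a*f)*(bx - a_x*x1)))
   + f*(((gy - a_y*f - a*fy)*d - (g-a*f)*(by' - a_y*x1 - a)))
   + (g-a*f)*(g-a*f)) / d^2 = ((gt - a_t*f - a*ft)*d - (g-a*f)*(bt - a_t*x1))/d^2
   + x1*(((gx - a_x*f - a*fx)*d - (g-a*f)*(bx - a_x*x1))/d^2)
   + f*(((gy - a_y*f - a*fy)*d - (g-a*f)*(by' - a_y*x1 - a))/d^2)
   + (g-a*f)/d * ((g-a*f)/d)"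
    by (simp only: add_divide_distrib times_divide_eq_right power2_eq_square times_divide_times_eq divide_divide_eq_left times_divide_eq_left)
  show ?thesis unfolding d_def[symmetric] using k2 e1 e2 by simp
qed

lemma sm_pt: assumes "smooth3 f" shows "((\<lambda>s. f s x y) has_real_derivative pt f t x y) (at t)"
  using assms
proof cases
  case (1 ft fx fy)
  then show ?thesis unfolding pt_def using DERIV_imp_deriv by metis
qed

lemma sm_px: assumes "smooth3 f" shows "((\<lambda>s. f t s y) has_real_derivative px f t x y) (at x)"
  using assms
proof cases
  case (1 ft fx fy)
  then show ?thesis unfolding px_def using DERIV_imp_deriv by metis
qed

lemma sm_py: assumes "smooth3 f" shows "((\<lambda>s. f t x s) has_real_derivative px1 f t x y) (at y)"
  using assms
proof cases
  case (1 ft fx fy)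
  then show ?thesis unfolding px1_def using DERIV_imp_deriv by metis
qed

lemma pt_lam:
  assumes a: "smooth3 \<alpha>" and b: "smooth3 \<beta>" and g: "smooth3 \<gamma>1" and F: "smooth3 F"
    and D: "\<beta> t x x1 - \<alpha> t x x1 * x1 \<noteq> 0"
  shows "pt (\<lambda>t x x1. (\<gamma>1 t x x1 - \<alpha> t x x1 * F t x x1) / (\<beta> t x x1 - \<alpha> t x x1 * x1)) t x x1
    = ((pt \<gamma>1 t x x1 - pt \<alpha> t x x1 * F t x x1 - \<alpha> t x x1 * pt F t x x1)*(\<beta> t x x1 - \<alpha> t x x1 * x1)
       - (\<gamma>1 t x x1 - \<alpha> t x x1 * F t x x1)*(pt \<beta> t x x1 - pt \<alpha> t x x1 * x1)) / (\<beta> t x x1 - \<alpha> t x x1 * x1)^2"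
proof -
  have "((\<lambda>s. (\<gamma>1 s x x1 - \<alpha> s x x1 * F s x x1) / (\<beta> s x x1 - \<alpha> s x x1 * x1)) has_real_derivative
     ((pt \<gamma>1 t x x1 - (\<alpha> t x x1 * pt F t x x1 + pt \<alpha> t x x1 * F t x x1)) * (\<beta> t x x1 - \<alpha> t x x1 * x1)
      - (\<gamma>1 t x x1 - \<alpha> t x x1 * F t x x1) * (pt \<beta> t x x1 - pt \<alpha> t x x1 * x1))
      / ((\<beta> t x x1 - \<alpha> t x x1 * x1) * (\<beta> t x x1 - \<alpha> t x x1 * x1))) (at t)"
    by (intro DERIV_divide DERIV_diff DERIV_mult' DERIV_cmult_right sm_pt a b g F D)
  from DERIV_imp_deriv[OF this] show ?thesis unfolding pt_def
    by (simp add: power2_eq_square algebra_simps)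
qed

lemma px_lam:
  assumes a: "smooth3 \<alpha>" and b: "smooth3 \<beta>" and g: "smooth3 \<gamma>1" and F: "smooth3 F"
    and D: "\<beta> t x x1 - \<alpha> t x x1 * x1 \<noteq> 0"
  shows "px (\<lambda>t x x1. (\<gamma>1 t x x1 - \<alpha> t x x1 * F t x x1) / (\<beta> t x x1 - \<alpha> t x x1 * x1)) t x x1
    = ((px \<gamma>1 t x x1 - px \<alpha> t x x1 * F t x x1 - \<alpha> t x x1 * px F t x x1)*(\<beta> t x x1 - \<alpha> t x x1 * x1)
       - (\<gamma>1 t x x1 - \<alpha> t x x1 * F t x x1)*(px \<beta> t x x1 - px \<alpha> t x x1 * x1)) / (\<beta> t x x1 - \<alpha> t x x1 * x1)^2"
proof -
  have "((\<lambda>s. (\<gamma>1 t s x1 - \<alpha> t s x1 * F t s x1) / (\<beta> t s x1 - \<alpha> t s x1 * x1)) has_real_derivative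
     ((px \<gamma>1 t x x1 - (\<alpha> t x x1 * px F t x x1 + px \<alpha> t x x1 * F t x x1)) * (\<beta> t x x1 - \<alpha> t x x1 * x1)
      - (\<gamma>1 t x x1 - \<alpha> t x x1 * F t x x1) * (px \<beta> t x x1 - px \<alpha> t x x1 * x1))
      / ((\<beta> t x x1 - \<alpha> t x x1 * x1) * (\<beta> t x x1 - \<alpha> t x x1 * x1))) (at x)"
    by (intro DERIV_divide DERIV_diff DERIV_mult' DERIV_cmult_right sm_px a b g F D)
  from DERIV_imp_deriv[OF this] show ?thesis unfolding px_def
    by (simp add: power2_eq_square algebra_simps)
qed

lemma py_lam:
  assumes a: "smooth3 \<alpha>" and b: "smooth3 \<beta>" and g: "smooth3 \<gamma>1" and F: "smooth3 F"
    and D: "\<beta> t x x1 - \<alpha> t x x1 * x1 \<noteq> 0"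
  shows "px1 (\<lambda>t x x1. (\<gamma>1 t x x1 - \<alpha> t x x1 * F t x x1) / (\<beta> t x x1 - \<alpha> t x x1 * x1)) t x x1
    = ((px1 \<gamma>1 t x x1 - px1 \<alpha> t x x1 * F t x x1 - \<alpha> t x x1 * px1 F t x x1)*(\<beta> t x x1 - \<alpha> t x x1 * x1)
       - (\<gamma>1 t x x1 - \<alpha> t x x1 * F t x x1)*(px1 \<beta> t x x1 - px1 \<alpha> t x x1 * x1 - \<alpha> t x x1)) / (\<beta> t x x1 - \<alpha> t x x1 * x1)^2"
proof -
  have "((\<lambda>s. (\<gamma>1 t x s - \<alpha> t x s * F t x s) / (\<beta> t x s - \<alpha> t x s * s)) has_real_derivative
     ((px1 \<gamma>1 t x x1 - (\<alpha> t x x1 * px1 F t x x1 + px1 \<alpha> t x x1 * F t x x1)) * (\<beta> t x x1 - \<alpha> t x x1 * x1)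
      - (\<gamma>1 t x x1 - \<alpha> t x x1 * F t x x1) * (px1 \<beta> t x x1 - (\<alpha> t x x1 * 1 + px1 \<alpha> t x x1 * x1)))
      / ((\<beta> t x x1 - \<alpha> t x x1 * x1) * (\<beta> t x x1 - \<alpha> t x x1 * x1))) (at x1)"
    by (intro DERIV_divide DERIV_diff DERIV_mult' DERIV_ident sm_py a b g F D)
  from DERIV_imp_deriv[OF this] show ?thesis unfolding px1_def
    by (simp add: power2_eq_square algebra_simps)
qed

theorem corollary2p6:
  fixes \<alpha> \<beta> \<gamma>1 F :: "real \<Rightarrow> real \<Rightarrow> real \<Rightarrow> real"
  assumes "smooth3 \<alpha>" and "smooth3 \<beta>" and "smooth3 \<gamma>1" and "smooth3 F"
    and "\<And>t x x1. \<beta> t x x1 - \<alpha> t x x1 * x1 \<noteq> 0"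
    and "telescopic_invariant \<alpha> \<beta> \<gamma>1 F"
  shows "lambda_symmetry (\<lambda>t x. 0) (\<lambda>t x. 1)
           (\<lambda>t x x1. (\<gamma>1 t x x1 - \<alpha> t x x1 * F t x x1) / (\<beta> t x x1 - \<alpha> t x x1 * x1)) F"
proof -
  let ?lam = "\<lambda>t x x1. (\<gamma>1 t x x1 - \<alpha> t x x1 * F t x x1) / (\<beta> t x x1 - \<alpha> t x x1 * x1)"
  have l1: "lphi1 (\<lambda>t x. 0) (\<lambda>t x. 1) ?lam = ?lam"
    by (rule ext)+ (simp add: lphi1_def Dt0_def)
  show ?thesis unfolding lambda_symmetry_def
  proof (intro allI)
    fix t x x1
    have D: "\<beta> t x x1 - \<alpha> t x x1 * x1 \<noteq> 0" by (rule assms(5))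
    have H: "gamma2 \<alpha> \<beta> \<gamma>1 t x x1 (F t x x1)
        = \<alpha> t x x1 * pt F t x x1 + \<beta> t x x1 * px F t x x1 + \<gamma>1 t x x1 * px1 F t x x1"
      using assms(6) unfolding telescopic_invariant_def by blast
    have H2: "(pt \<gamma>1 t x x1 + x1*px \<gamma>1 t x x1 + F t x x1*px1 \<gamma>1 t x x1)
      - (pt \<alpha> t x x1 + x1*px \<alpha> t x x1 + F t x x1*px1 \<alpha> t x x1)*F t x x1
      + (\<gamma>1 t x x1 + x1*(pt \<alpha> t x x1 + x1*px \<alpha> t x x1 + F t x x1*px1 \<alpha> t x x1)
         - (pt \<beta> t x x1 + x1*px \<beta> t x x1+F t x x1*px1 \<beta> t x x1))/(\<beta> t x x1 - x1*\<alpha> t x x1)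
        *(\<gamma>1 t x x1 - \<alpha> t x x1*F t x x1)
      = \<alpha> t x x1*pt F t x x1 + \<beta> t x x1*px F t x x1 + \<gamma>1 t x x1*px1 F t x x1"
      using H unfolding gamma2_def Dt_def by simp
    note A = alg[OF D H2]
    show "lphi2 (\<lambda>t x. 0) (\<lambda>t x. 1) ?lam t x x1 (F t x x1) =
       0 * pt F t x x1 + 1 * px F t x x1 + lphi1 (\<lambda>t x. 0) (\<lambda>t x. 1) ?lam t x x1 * px1 F t x x1"
      unfolding lphi2_def l1 Dt_def Dt0_def
      using A pt_lam[OF assms(1-4) D] px_lam[OF assms(1-4) D] py_lam[OF assms(1-4) D]
      by simp
  qed
qed

end
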